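(* Let $H$ be a connected graph and let $G=KB(H)$ be its biclique graph. Let $b_1,b_2$ be false-twin vertices of $G$ (i.e. $b_1\neq b_2$ and $N_G(b_1)=N_G(b_2)$), and let $B_1,B_2$ be the bicliques of $H$ corresponding to $b_1,b_2$. Suppose that there is no edge of $H$ between a vertex of $B_1$ and a vertex of $B_2$. Then there exists a vertex $v\in V(H)$ that is adjacent to every vertex of $B_1$ and to every vertex of $B_2$. Furthermore, $G$ contains $K_5$ as an induced subgraph.
   Context: All graphs are finite, simple, undirected and connected. A biclique of a graph $H$ is a maximal (under inclusion of vertex sets) induced complete bipartite subgraph of $H$ with both sides nonempty. The biclique graph $KB(H)$ is the intersection graph of the bicliques of $H$: its vertices are the bicliques of $H$, and two distinct bicliques are adjacent iff they share at least one vertex. $N(u)$ denotes the open neighborhood of $u$; two vertices $u,w$ are false twins if $N(u)=N(w)$. *)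

theory Defs
  imports Main
begin

definition simple_graph :: "'a set \<Rightarrow> ('a \<Rightarrow> 'a \<Rightarrow> bool) \<Rightarrow> bool" where
  "simple_graph V E \<longleftrightarrow> finite V \<and> V \<noteq> {} \<and>
     (\<forall>x y. E x y \<longrightarrow> x \<in> V \<and> y \<in> V) \<and>
     (\<forall>x y. E x y \<longrightarrow> E y x) \<and> (\<forall>x. \<not> E x x)"

definition connected_graph :: "'a set \<Rightarrow> ('a \<Rightarrow> 'a \<Rightarrow> bool) \<Rightarrow> bool" where
  "connected_graph V E \<longleftrightarrow> simple_graph V E \<and>
     (\<forall>x\<in>V. \<forall>y\<in>V. (\<lambda>u w. E u w)\<^sup>*\<^sup>* x y)"

definition induced_complete_bipartite :: "'a set \<Rightarrow> ('a \<Rightarrow> 'a \<Rightarrow> bool) \<Rightarrow> 'a set \<Rightarrow> bool" where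
  "induced_complete_bipartite V E S \<longleftrightarrow> S \<subseteq> V \<and>
     (\<exists>X Y. X \<noteq> {} \<and> Y \<noteq> {} \<and> X \<inter> Y = {} \<and> X \<union> Y = S \<and>
        (\<forall>x\<in>X. \<forall>x'\<in>X. \<not> E x x') \<and> (\<forall>y\<in>Y. \<forall>y'\<in>Y. \<not> E y y') \<and>
        (\<forall>x\<in>X. \<forall>y\<in>Y. E x y))"

text \<open>A biclique (identified with its vertex set, since it is induced):
maximal under inclusion of vertex sets.\<close>
definition biclique :: "'a set \<Rightarrow> ('a \<Rightarrow> 'a \<Rightarrow> bool) \<Rightarrow> 'a set \<Rightarrow> bool" where
  "biclique V E S \<longleftrightarrow> induced_complete_bipartite V E S \<and>
     (\<forall>S'. induced_complete_bipartite V E S' \<and> S \<subseteq> S' \<longrightarrow> S' = S)"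

definition KB_vertices :: "'a set \<Rightarrow> ('a \<Rightarrow> 'a \<Rightarrow> bool) \<Rightarrow> 'a set set" where
  "KB_vertices V E = {S. biclique V E S}"

definition KB_adj :: "'a set \<Rightarrow> ('a \<Rightarrow> 'a \<Rightarrow> bool) \<Rightarrow> 'a set \<Rightarrow> 'a set \<Rightarrow> bool" where
  "KB_adj V E B B' \<longleftrightarrow> B \<in> KB_vertices V E \<and> B' \<in> KB_vertices V E \<and> B \<noteq> B' \<and> B \<inter> B' \<noteq> {}"

definition nbhd :: "('b \<Rightarrow> 'b \<Rightarrow> bool) \<Rightarrow> 'b \<Rightarrow> 'b set" where
  "nbhd E u = {w. E u w}"

definition false_twins :: "('b \<Rightarrow> 'b \<Rightarrow> bool) \<Rightarrow> 'b \<Rightarrow> 'b \<Rightarrow> bool" where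
  "false_twins E u w \<longleftrightarrow> u \<noteq> w \<and> nbhd E u = nbhd E w"

definition has_induced_K :: "nat \<Rightarrow> 'b set \<Rightarrow> ('b \<Rightarrow> 'b \<Rightarrow> bool) \<Rightarrow> bool" where
  "has_induced_K n VG EG \<longleftrightarrow> (\<exists>K. K \<subseteq> VG \<and> finite K \<and> card K = n \<and>
      (\<forall>x\<in>K. \<forall>y\<in>K. x \<noteq> y \<longrightarrow> EG x y))"

end

theory Submission
  imports Defs
begin

lemma icb_pos:
  assumes "induced_complete_bipartite V E S" "a \<in> S" "b \<in> S" "c \<in> S" "E a b"
    and sym: "\<forall>x y. E x y \<longrightarrow> E y x"
  shows "E a c \<or> E b c"
  using assms unfolding induced_complete_bipartite_def by blast

lemma icb_two:
  assumes "induced_complete_bipartite V E S" "x \<in> S" "w \<in> S"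
    and sym: "\<forall>x y. E x y \<longrightarrow> E y x"
  shows "E x w \<or> (\<exists>u\<in>S. E x u \<and> E u w)"
proof -
  obtain X Y where XY: "X \<noteq> {}" "Y \<noteq> {}" "X \<inter> Y = {}" "X \<union> Y = S"
    "\<forall>x\<in>X. \<forall>x'\<in>X. \<not> E x x'" "\<forall>y\<in>Y. \<forall>y'\<in>Y. \<not> E y y'" "\<forall>x\<in>X. \<forall>y\<in>Y. E x y"
    using assms(1) unfolding induced_complete_bipartite_def by blast
  obtain x0 where "x0 \<in> X" using XY by blast
  obtain y0 where "y0 \<in> Y" using XY by blast
  have xs: "x \<in> X \<or> x \<in> Y" and ws: "w \<in> X \<or> w \<in> Y" using XY(4) assms(2,3) by auto
  show ?thesis
  proof (cases "x \<in> X")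
    case True
    show ?thesis
    proof (cases "w \<in> Y")
      case True then show ?thesis using \<open>x \<in> X\<close> XY(7) by blast
    next
      case False then have "w \<in> X" using ws by blast
      then have "E x y0 \<and> E y0 w" using \<open>x \<in> X\<close> \<open>y0 \<in> Y\<close> XY(7) sym by blast
      then show ?thesis using \<open>y0 \<in> Y\<close> XY(4) by blast
    qed
  next
    case False then have xY: "x \<in> Y" using xs by blast
    show ?thesis
    proof (cases "w \<in> X")
      case True then show ?thesis using xY XY(7) sym by blast
    next
      case False then have "w \<in> Y" using ws by blast
      then have "E x x0 \<and> E x0 w" using xY \<open>x0 \<in> X\<close> XY(7) sym by blast
      then show ?thesis using \<open>x0 \<in> X\<close> XY(4) by blast
    qed
  qed
qed

lemma icb_triangle:
  assumes "induced_complete_bipartite V E S" "a \<in> S" "b \<in> S" "c \<in> S" "E a b" "E b c" "E a c"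
    and sym: "\<forall>x y. E x y \<longrightarrow> E y x"
  shows False
  using assms unfolding induced_complete_bipartite_def by blast

lemma icb_nonempty: "induced_complete_bipartite V E S \<Longrightarrow> S \<noteq> {}"
  unfolding induced_complete_bipartite_def by blast

lemma icb_sub: "induced_complete_bipartite V E S \<Longrightarrow> S \<subseteq> V"
  unfolding induced_complete_bipartite_def by blast

lemma extend:
  assumes "finite V" "induced_complete_bipartite V E S"
  shows "\<exists>B. biclique V E B \<and> S \<subseteq> B"
  using assms(2)
proof (induction "card (V - S)" arbitrary: S rule: less_induct)
  case less
  show ?case
  proof (cases "biclique V E S")
    case True then show ?thesis by blast
  next
    case False
    then obtain S' where S': "induced_complete_bipartite V E S'" "S \<subseteq> S'" "S' \<noteq> S"
      using less.prems unfolding biclique_def by blast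
    have "S' \<subseteq> V" using S'(1) icb_sub by blast
    then have "V - S' \<subset> V - S" using S' by blast
    then have "card (V - S') < card (V - S)" using assms(1) by (simp add: psubset_card_mono)
    then obtain B where "biclique V E B" "S' \<subseteq> B" using less.hyps S'(1) by blast
    then show ?thesis using S'(2) by blast
  qed
qed

lemma exit_edge:
  assumes "R\<^sup>*\<^sup>* a b" "a \<in> A" "b \<notin> A"
  shows "\<exists>x y. x \<in> A \<and> y \<notin> A \<and> R x y"
  using assms by (induction rule: rtranclp_induct) blast+

lemma claimA:
  assumes sg: "simple_graph V E"
    and Bi: "biclique V E Bi" and Bj: "biclique V E Bj"
    and disj: "Bi \<inter> Bj = {}"
    and noedge: "\<forall>a\<in>Bi. \<forall>b\<in>Bj. \<not> E a b"
    and tw: "\<forall>C. biclique V E C \<and> C \<inter> Bi \<noteq> {} \<and> C \<noteq> Bi \<and> C \<noteq> Bj \<longrightarrow> C \<inter> Bj \<noteq> {}"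
    and v: "v \<in> V" "v \<notin> Bi" and x: "x \<in> Bi" "E v x" and u: "u \<in> Bi" "E x u"
  shows "E v u"
proof (rule ccontr)
  assume nvu: "\<not> E v u"
  have sym: "\<forall>x y. E x y \<longrightarrow> E y x" and irr: "\<forall>x. \<not> E x x"
    and inV: "\<forall>x y. E x y \<longrightarrow> x \<in> V \<and> y \<in> V" and fin: "finite V"
    using sg unfolding simple_graph_def by auto
  have "induced_complete_bipartite V E {x, v, u}"
    unfolding induced_complete_bipartite_def
    apply (rule conjI)
    using inV x u v apply blast
    apply (rule exI[of _ "{x}"], rule exI[of _ "{v,u}"])
    using x u v nvu sym irr by auto
  then obtain C where C: "biclique V E C" "{x,v,u} \<subseteq> C" using extend fin by blast
  have "x \<notin> Bj" using x disj by blast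
  then have "C \<inter> Bj \<noteq> {}" using tw C x v by blast
  then obtain y where y: "y \<in> C" "y \<in> Bj" by blast
  have "E x y \<or> E u y"
    using icb_pos[of V E C x u y] C y u sym unfolding biclique_def by blast
  then show False using noedge x u y by blast
qed

lemma claimB:
  assumes sg: "simple_graph V E"
    and Bi: "biclique V E Bi" and Bj: "biclique V E Bj"
    and disj: "Bi \<inter> Bj = {}"
    and noedge: "\<forall>a\<in>Bi. \<forall>b\<in>Bj. \<not> E a b"
    and tw: "\<forall>C. biclique V E C \<and> C \<inter> Bi \<noteq> {} \<and> C \<noteq> Bi \<and> C \<noteq> Bj \<longrightarrow> C \<inter> Bj \<noteq> {}"
    and v: "v \<in> V" "v \<notin> Bi" and x: "x \<in> Bi" "E v x"
  shows "\<forall>w\<in>Bi. E v w"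
proof
  fix w assume w: "w \<in> Bi"
  have sym: "\<forall>x y. E x y \<longrightarrow> E y x" using sg unfolding simple_graph_def by auto
  have icb: "induced_complete_bipartite V E Bi" using Bi unfolding biclique_def by blast
  from icb_two[OF icb x(1) w sym]
  show "E v w"
  proof
    assume "E x w" then show ?thesis using claimA[OF assms(1-6) v x w] by blast
  next
    assume "\<exists>u\<in>Bi. E x u \<and> E u w"
    then obtain u where u: "u \<in> Bi" "E x u" "E u w" by blast
    have "E v u" using claimA[OF assms(1-6) v x u(1,2)] .
    then show ?thesis using claimA[OF assms(1-6) v u(1) _ w u(3)] by blast
  qed
qed

theorem lemma1:
  fixes V :: "'a set" and E :: "'a \<Rightarrow> 'a \<Rightarrow> bool" and B1 B2 :: "'a set"
  assumes "connected_graph V E"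
    and "B1 \<in> KB_vertices V E" and "B2 \<in> KB_vertices V E"
    and "false_twins (KB_adj V E) B1 B2"
    and "\<forall>x\<in>B1. \<forall>y\<in>B2. \<not> E x y"
  shows "(\<exists>v\<in>V. \<forall>x\<in>B1 \<union> B2. E v x) \<and> has_induced_K 5 (KB_vertices V E) (KB_adj V E)"
proof -
  have sg: "simple_graph V E" using assms(1) unfolding connected_graph_def by blast
  have sym: "\<forall>x y. E x y \<longrightarrow> E y x" and irr: "\<forall>x. \<not> E x x"
    and inV: "\<forall>x y. E x y \<longrightarrow> x \<in> V \<and> y \<in> V" and fin: "finite V"
    using sg unfolding simple_graph_def by auto
  have conn: "\<forall>x\<in>V. \<forall>y\<in>V. E\<^sup>*\<^sup>* x y" using assms(1) unfolding connected_graph_def by blast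
  have b1: "biclique V E B1" and b2: "biclique V E B2" using assms(2,3) unfolding KB_vertices_def by auto
  have icb1: "induced_complete_bipartite V E B1" and icb2: "induced_complete_bipartite V E B2"
    using b1 b2 unfolding biclique_def by auto
  have ne: "B1 \<noteq> B2" and nb: "nbhd (KB_adj V E) B1 = nbhd (KB_adj V E) B2"
    using assms(4) unfolding false_twins_def by auto
  have disj: "B1 \<inter> B2 = {}"
  proof (rule ccontr)
    assume "B1 \<inter> B2 \<noteq> {}"
    then have "KB_adj V E B1 B2" using assms(2,3) ne unfolding KB_adj_def by blast
    then have "B2 \<in> nbhd (KB_adj V E) B2" using nb unfolding nbhd_def by blast
    then show False unfolding nbhd_def KB_adj_def by blast
  qed
  have tw12: "\<forall>C. biclique V E C \<and> C \<inter> B1 \<noteq> {} \<and> C \<noteq> B1 \<and> C \<noteq> B2 \<longrightarrow> C \<inter> B2 \<noteq> {}"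
  proof (intro allI impI)
    fix C assume h: "biclique V E C \<and> C \<inter> B1 \<noteq> {} \<and> C \<noteq> B1 \<and> C \<noteq> B2"
    then have "KB_adj V E B1 C" using assms(2) unfolding KB_adj_def KB_vertices_def by blast
    then have "C \<in> nbhd (KB_adj V E) B2" using nb unfolding nbhd_def by blast
    then show "C \<inter> B2 \<noteq> {}" unfolding nbhd_def KB_adj_def by blast
  qed
  have tw21: "\<forall>C. biclique V E C \<and> C \<inter> B2 \<noteq> {} \<and> C \<noteq> B2 \<and> C \<noteq> B1 \<longrightarrow> C \<inter> B1 \<noteq> {}"
  proof (intro allI impI)
    fix C assume h: "biclique V E C \<and> C \<inter> B2 \<noteq> {} \<and> C \<noteq> B2 \<and> C \<noteq> B1"
    then have "KB_adj V E B2 C" using assms(3) unfolding KB_adj_def KB_vertices_def by blast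
    then have "C \<in> nbhd (KB_adj V E) B1" using nb unfolding nbhd_def by blast
    then show "C \<inter> B1 \<noteq> {}" unfolding nbhd_def KB_adj_def by blast
  qed
  have noedge21: "\<forall>a\<in>B2. \<forall>b\<in>B1. \<not> E a b" using assms(5) sym by blast
  obtain x0 where x0: "x0 \<in> B1" using icb_nonempty[OF icb1] by blast
  obtain y0 where y0: "y0 \<in> B2" using icb_nonempty[OF icb2] by blast
  have "x0 \<in> V" "y0 \<in> V" using x0 y0 icb_sub[OF icb1] icb_sub[OF icb2] by auto
  then have "E\<^sup>*\<^sup>* x0 y0" using conn by blast
  moreover have "y0 \<notin> B1" using y0 disj by blast
  ultimately obtain x v where xv: "x \<in> B1" "v \<notin> B1" "E x v" using exit_edge x0 by metis
  have vV: "v \<in> V" using xv inV by blast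
  have Evx: "E v x" using xv sym by blast
  have all1: "\<forall>w\<in>B1. E v w" using claimB[OF sg b1 b2 disj assms(5) tw12 vV xv(2) xv(1) Evx] .
  have vnB2: "v \<notin> B2" using assms(5) xv by blast
  have "induced_complete_bipartite V E {x, v}"
    unfolding induced_complete_bipartite_def
    apply (rule conjI)
    using inV xv apply blast
    apply (rule exI[of _ "{x}"], rule exI[of _ "{v}"])
    using xv irr by auto
  then obtain C where C: "biclique V E C" "{x,v} \<subseteq> C" using extend fin by blast
  have "x \<notin> B2" using xv disj by blast
  then have "C \<inter> B2 \<noteq> {}" using tw12 C xv by blast
  then obtain y where y: "y \<in> C" "y \<in> B2" by blast
  have "E x y \<or> E v y"
    using icb_pos[of V E C x v y] C y xv sym unfolding biclique_def by blast
  then have Evy: "E v y" using assms(5) xv y by blast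
  have all2: "\<forall>w\<in>B2. E v w"
    using claimB[OF sg b2 b1 _ noedge21 tw21 vV vnB2 y(2) Evy] disj by blast
  have part1: "\<exists>v\<in>V. \<forall>x\<in>B1 \<union> B2. E v x" using all1 all2 vV by blast
  obtain X1 Y1 where P1: "X1 \<noteq> {}" "Y1 \<noteq> {}" "X1 \<union> Y1 = B1" "\<forall>a\<in>X1. \<forall>b\<in>Y1. E a b"
    using icb1 unfolding induced_complete_bipartite_def by blast
  obtain X2 Y2 where P2: "X2 \<noteq> {}" "Y2 \<noteq> {}" "X2 \<union> Y2 = B2" "\<forall>a\<in>X2. \<forall>b\<in>Y2. E a b"
    using icb2 unfolding induced_complete_bipartite_def by blast
  obtain x1 y1 x2 y2 where pts: "x1 \<in> X1" "y1 \<in> Y1" "x2 \<in> X2" "y2 \<in> Y2"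
    using P1 P2 by blast
  have E1: "E x1 y1" and E2: "E x2 y2" using P1 P2 pts by auto
  have star: "\<exists>D. biclique V E D \<and> {v, a, b} \<subseteq> D" if ab: "a \<in> B1" "b \<in> B2" for a b
  proof -
    have "induced_complete_bipartite V E {v, a, b}"
      unfolding induced_complete_bipartite_def
      apply (rule conjI)
      using vV ab icb_sub[OF icb1] icb_sub[OF icb2] apply blast
      apply (rule exI[of _ "{v}"], rule exI[of _ "{a,b}"])
      using ab all1 all2 irr assms(5) noedge21 sym by auto
    then show ?thesis using extend fin by blast
  qed
  have x1B: "x1 \<in> B1" "y1 \<in> B1" "x2 \<in> B2" "y2 \<in> B2" using pts P1 P2 by auto
  obtain C1 where C1: "biclique V E C1" "{v, x1, x2} \<subseteq> C1" using star x1B by blast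
  obtain C2 where C2: "biclique V E C2" "{v, x1, y2} \<subseteq> C2" using star x1B by blast
  obtain C3 where C3: "biclique V E C3" "{v, y1, x2} \<subseteq> C3" using star x1B by blast
  obtain C4 where C4: "biclique V E C4" "{v, y1, y2} \<subseteq> C4" using star x1B by blast
  have Evs: "E v x1" "E v y1" "E v x2" "E v y2" using all1 all2 x1B by auto
  have tri: False if "biclique V E D" "a \<in> D" "b \<in> D" "E a b" "E v a" "E v b" "v \<in> D" for D a b
    using icb_triangle[of V E D v a b] that sym unfolding biclique_def by blast
  have d12: "C1 \<noteq> C2" using tri[OF C1(1), of x2 y2] C1 C2 E2 Evs by auto
  have d13: "C1 \<noteq> C3" using tri[OF C1(1), of x1 y1] C1 C3 E1 Evs by auto
  have d14: "C1 \<noteq> C4" using tri[OF C1(1), of x1 y1] C1 C4 E1 Evs by auto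
  have d23: "C2 \<noteq> C3" using tri[OF C2(1), of x1 y1] C2 C3 E1 Evs by auto
  have d24: "C2 \<noteq> C4" using tri[OF C2(1), of x1 y1] C2 C4 E1 Evs by auto
  have d34: "C3 \<noteq> C4" using tri[OF C3(1), of x2 y2] C3 C4 E2 Evs by auto
  have vnB1: "v \<notin> B1" using all1 irr by blast
  have dB: "B1 \<noteq> C1" "B1 \<noteq> C2" "B1 \<noteq> C3" "B1 \<noteq> C4" using vnB1 C1 C2 C3 C4 by auto
  let ?K = "{B1, C1, C2, C3, C4}"
  have "card ?K = 5" using d12 d13 d14 d23 d24 d34 dB by simp
  moreover have "?K \<subseteq> KB_vertices V E" using assms(2) C1 C2 C3 C4 unfolding KB_vertices_def by auto
  moreover have "\<forall>a\<in>?K. \<forall>b\<in>?K. a \<noteq> b \<longrightarrow> KB_adj V E a b"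
    unfolding KB_adj_def using assms(2) C1 C2 C3 C4 x1B unfolding KB_vertices_def by blast
  ultimately have "has_induced_K 5 (KB_vertices V E) (KB_adj V E)"
    unfolding has_induced_K_def by blast
  with part1 show ?thesis by blast
qed

end
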